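(* Let $\overline{D}$ and $\overline{A}$ be toric metrized divisors on $X$ with $A$ effective. Then \[ \lim_{l\in\mathbb{N},\,l\to\infty}\frac{1}{l^{n+1}}\int_{l\Delta_D+\Delta_A}\check g_{l\overline{D}+\overline{A}}(x)\,dx=\int_{\Delta_D}\check g_{\overline{D}}(x)\,dx, \] where $g_{l\overline{D}+\overline{A}}=l\,g_{\overline{D}}+g_{\overline{A}}$ and $\check{}$ denotes the Legendre–Fenchel transform below.
   Context: Toric setup: $Q$ free $\mathbb{Z}$-module of rank $n$, $P$ its dual, $Q_\mathbb{R},P_\mathbb{R}$ with pairing $\langle\cdot,\cdot\rangle$; $X$ nonsingular projective complex toric variety with compact torus $\mathbb{S}_Q$ and map $u\mapsto\exp(-u)$, $Q_\mathbb{R}\to\mathbb{T}_Q$, $\chi^m(\exp(-u))=e^{-\langle m,u\rangle}$. For a toric divisor $D$ with canonical rational section $s_D$ and support function $\Psi_D$, $\Delta_D=\{x:\langle x,u\rangle\ge\Psi_D(u)\ \forall u\}$; $l\Delta_D+\Delta_A$ is a Minkowski sum; $dx$ is Lebesgue measure on $P_\mathbb{R}$. The canonical metric $\|\cdot\|_{\infty,D}$ is the $\mathbb{S}_Q$-invariant metric with $\log\|s_D(\exp(-u))\|_{\infty,D}=\inf_{v\in\Delta_D}\langle v,u\rangle$. A toric metrized divisor is $D$ with an $\mathbb{S}_Q$-invariant hermitian metric with ratio to $\|\cdot\|_{\infty,D}$ bounded on $X$. $g_{\overline{D}}(u)=\log\|s_D(\exp(-u))\|_{\overline{D}}$; for a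 function $g$ on $Q_\mathbb{R}$, $\check g(x)=\inf_{u\in Q_\mathbb{R}}(\langle x,u\rangle-g(u))$. *)

theory Defs
  imports "HOL-Analysis.Analysis"
begin

text \<open>Q_R = P_R = real^'n (n = CARD('n)), lattice Q = integer
vectors, pairing = inner product.  A fan is given by a finite set V of ray
generators and a set Sigma of cones, each cone given by its finite set of
ray generators.\<close>

definition int_vec :: "real^'n \<Rightarrow> bool" where
  "int_vec x \<longleftrightarrow> (\<forall>i. x $ i \<in> \<int>)"

definition zbasis :: "(real^'n) set \<Rightarrow> bool" where
  "zbasis B \<longleftrightarrow> finite B \<and> card B = CARD('n) \<and> (\<forall>b\<in>B. int_vec b) \<and>
     (\<forall>x. int_vec x \<longrightarrow> (\<exists>c. (\<forall>b\<in>B. c b \<in> \<int>) \<and> x = (\<Sum>b\<in>B. c b *\<^sub>R b)))"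

definition pos_cone :: "(real^'n) set \<Rightarrow> (real^'n) set" where
  "pos_cone S = {(\<Sum>v\<in>S. l v *\<^sub>R v) | l. \<forall>v\<in>S. l v \<ge> 0}"

text \<open>Fan of a nonsingular projective toric variety: smooth cones, closed under
faces, meeting along faces, complete, and admitting a strictly convex
(ample) support function.\<close>
definition smooth_projective_fan :: "(real^'n) set \<Rightarrow> (real^'n) set set \<Rightarrow> bool" where
  "smooth_projective_fan V \<Sigma> \<longleftrightarrow>
     finite V \<and> finite \<Sigma> \<and>
     (\<forall>S\<in>\<Sigma>. S \<subseteq> V \<and> (\<exists>B. zbasis B \<and> S \<subseteq> B)) \<and>
     (\<forall>S\<in>\<Sigma>. \<forall>T. T \<subseteq> S \<longrightarrow> T \<in> \<Sigma>) \<and>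
     (\<forall>v\<in>V. {v} \<in> \<Sigma>) \<and>
     (\<forall>S\<in>\<Sigma>. \<forall>T\<in>\<Sigma>. pos_cone S \<inter> pos_cone T = pos_cone (S \<inter> T)) \<and>
     (\<Union>S\<in>\<Sigma>. pos_cone S) = UNIV \<and>
     (\<exists>a::real^'n \<Rightarrow> int. \<forall>S\<in>\<Sigma>. card S = CARD('n) \<longrightarrow>
        (\<exists>m. (\<forall>v\<in>S. m \<bullet> v = - of_int (a v)) \<and> (\<forall>v\<in>V - S. m \<bullet> v > - of_int (a v))))"

text \<open>A toric divisor D = sum of a(v) D_v; its support function Psi_D is linear on
each cone with Psi_D(v) = - a(v) on ray generators.\<close>
definition supp_fun :: "(real^'n) set set \<Rightarrow> (real^'n \<Rightarrow> int) \<Rightarrow> real^'n \<Rightarrow> real" where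
  "supp_fun \<Sigma> a u = (THE t. \<exists>S\<in>\<Sigma>. \<exists>l. (\<forall>v\<in>S. l v \<ge> 0) \<and>
      u = (\<Sum>v\<in>S. l v *\<^sub>R v) \<and> t = - (\<Sum>v\<in>S. l v * of_int (a v)))"

definition polytope :: "(real^'n) set set \<Rightarrow> (real^'n \<Rightarrow> int) \<Rightarrow> (real^'n) set" where
  "polytope \<Sigma> a = {x. \<forall>u. x \<bullet> u \<ge> supp_fun \<Sigma> a u}"

definition effective :: "(real^'n) set \<Rightarrow> (real^'n \<Rightarrow> int) \<Rightarrow> bool" where
  "effective V a \<longleftrightarrow> (\<forall>v\<in>V. a v \<ge> 0)"

text \<open>log ||s_D(exp(-u))||_{infinity,D} = inf over Delta_D of <v,u>.\<close>
definition canon_log :: "(real^'n) set \<Rightarrow> real^'n \<Rightarrow> real" where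
  "canon_log \<Delta> u = (INF v\<in>\<Delta>. v \<bullet> u)"

text \<open>g = g_{D-bar} of a toric metrized divisor (continuous S_Q-invariant metric
whose ratio to the canonical metric is bounded).\<close>
definition toric_metrized :: "(real^'n) set set \<Rightarrow> (real^'n \<Rightarrow> int) \<Rightarrow> (real^'n \<Rightarrow> real) \<Rightarrow> bool" where
  "toric_metrized \<Sigma> a g \<longleftrightarrow> continuous_on UNIV g \<and>
     (\<exists>C. \<forall>u. \<bar>g u - canon_log (polytope \<Sigma> a) u\<bar> \<le> C)"

definition legendre :: "(real^'n \<Rightarrow> real) \<Rightarrow> real^'n \<Rightarrow> real" where
  "legendre g x = (INF u. x \<bullet> u - g u)"

end

theory Submission
  imports Defs
begin


lemma lborel_integral_scale:
  fixes f :: "'a::euclidean_space \<Rightarrow> real"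
  assumes f[measurable]: "f \<in> borel_measurable borel" and c: "c \<noteq> 0"
  shows "(\<integral>x. f x \<partial>lborel) = \<bar>c\<bar>^DIM('a) * (\<integral>x. f (c *\<^sub>R x) \<partial>lborel)"
proof -
  have eq: "lborel = density (distr lborel borel (\<lambda>x::'a. 0 + c *\<^sub>R x)) (\<lambda>_. \<bar>c\<bar>^DIM('a))"
    by (rule lborel_affine[OF c])
  have "(\<integral>x. f x \<partial>lborel) = (\<integral>x. f x \<partial>(density (distr lborel borel (\<lambda>x::'a. 0 + c *\<^sub>R x)) (\<lambda>_. \<bar>c\<bar>^DIM('a))))"
    using eq by (rule arg_cong)
  also have "\<dots> = (\<integral>x. \<bar>c\<bar>^DIM('a) * f x \<partial>(distr lborel borel (\<lambda>x::'a. 0 + c *\<^sub>R x)))"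
    by (subst integral_density) auto
  also have "\<dots> = (\<integral>x. \<bar>c\<bar>^DIM('a) * f (0 + c *\<^sub>R x) \<partial>lborel)"
    by (subst integral_distr) auto
  finally show ?thesis by simp
qed

lemma cINF_mult_pos:
  fixes f :: "'a \<Rightarrow> real"
  assumes c: "c > 0" and b: "bdd_below (range f)"
  shows "(INF u. c * f u) = c * (INF u. f u)"
proof (rule antisym)
  have b2: "bdd_below (range (\<lambda>u. c * f u))"
  proof -
    obtain m where m: "\<And>u. m \<le> f u" using b by (auto simp: bdd_below_def)
    show ?thesis by (rule bdd_belowI[of _ "c * m"]) (use m c in \<open>auto intro!: mult_left_mono\<close>)
  qed
  show "c * (INF u. f u) \<le> (INF u. c * f u)"
    by (rule cINF_greatest) (use b c in \<open>auto intro!: mult_left_mono cINF_lower\<close>)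
  have "(INF u. c * f u) / c \<le> (INF u. f u)"
  proof (rule cINF_greatest)
    fix u show "(INF u. c * f u) / c \<le> f u"
      using cINF_lower[OF b2, of u] c by (simp add: divide_le_eq mult.commute)
  qed simp
  then show "(INF u. c * f u) \<le> c * (INF u. f u)" using c by (simp add: divide_le_eq mult.commute)
qed

lemma measurable_ind_legendre:
  fixes g :: "real^'n \<Rightarrow> real"
  assumes S: "S \<in> sets borel" and b: "\<And>x. x \<in> S \<Longrightarrow> bdd_below (range (\<lambda>u. x \<bullet> u - g u))"
  shows "(\<lambda>x. indicator S x * legendre g x) \<in> borel_measurable borel"
  unfolding borel_measurable_iff_less
proof
  fix c :: real
  have eq: "{w \<in> space borel. indicator S w * legendre g w < c} =
     (S \<inter> (\<Union>u. {x. x \<bullet> u - g u < c})) \<union> ((- S) \<inter> {x. 0 < c})"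
    using b by (auto simp: indicator_def legendre_def cINF_less_iff)
  have o1: "{x. x \<bullet> u - g u < c} = {x. inner u x < c + g u}" for u
    by (auto simp: inner_commute)
  have o: "open (\<Union>u. {x. x \<bullet> u - g u < c})"
    unfolding o1 by (intro open_UN ballI open_halfspace_lt)
  show "{w \<in> space borel. indicator S w * legendre g w < c} \<in> sets borel"
    unfolding eq using S o by (auto simp: borel_open)
qed


lemma fan_cones: "smooth_projective_fan V \<Sigma> \<Longrightarrow> S \<in> \<Sigma> \<Longrightarrow> S \<subseteq> V \<and> (\<exists>B. zbasis B \<and> S \<subseteq> B)"
  unfolding smooth_projective_fan_def by (elim conjE) (drule bspec, assumption)
lemma fan_inter: "smooth_projective_fan V \<Sigma> \<Longrightarrow> S \<in> \<Sigma> \<Longrightarrow> T \<in> \<Sigma> \<Longrightarrow> pos_cone S \<inter> pos_cone T = pos_cone (S \<inter> T)"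
  unfolding smooth_projective_fan_def by (elim conjE) (drule bspec, assumption, drule bspec, assumption)
lemma fan_complete: "smooth_projective_fan V \<Sigma> \<Longrightarrow> (\<Union>S\<in>\<Sigma>. pos_cone S) = UNIV"
  unfolding smooth_projective_fan_def by (elim conjE)
lemma zbasis_indep:
  fixes B :: "(real^'n) set"
  assumes "zbasis B" shows "independent B"
proof -
  have fin: "finite B" and cB: "card B = CARD('n)" and iv: "\<forall>b\<in>B. int_vec b"
    and sp: "\<forall>x. int_vec x \<longrightarrow> (\<exists>c. (\<forall>b\<in>B. c b \<in> \<int>) \<and> x = (\<Sum>b\<in>B. c b *\<^sub>R b))"
    using assms unfolding zbasis_def by auto
  have "Basis \<subseteq> span B"
  proof
    fix x :: "real^'n" assume "x \<in> Basis"
    then have "int_vec x" by (auto simp: Basis_vec_def int_vec_def axis_def)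
    then obtain c where "x = (\<Sum>b\<in>B. c b *\<^sub>R b)" using sp by blast
    moreover have "(\<Sum>b\<in>B. c b *\<^sub>R b) \<in> span B"
      by (rule span_sum, rule span_scale, rule span_base) simp
    ultimately show "x \<in> span B" by simp
  qed
  then have "UNIV \<subseteq> span B"
    by (metis span_Basis span_mono span_span)
  then show ?thesis
    by (intro card_le_dim_spanning[of B UNIV]) (use fin cB in auto)
qed

lemma rep_sub:
  assumes fan: "smooth_projective_fan V \<Sigma>" and S: "S \<in> \<Sigma>" and R: "R \<subseteq> S"
    and eq: "(\<Sum>v\<in>S. l v *\<^sub>R v) = (\<Sum>v\<in>R. m v *\<^sub>R v)"
  shows "(\<Sum>v\<in>S. l v * a v) = (\<Sum>v\<in>R. m v * a v)"
proof -
  obtain B where B: "zbasis B" "S \<subseteq> B" using fan_cones[OF fan S] by blast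
  have finB: "finite B" using B unfolding zbasis_def by auto
  have fin: "finite S" using B finB finite_subset by blast
  have ind: "independent S" using zbasis_indep[OF B(1)] B(2) by (rule independent_mono)
  define m' where "m' v = (if v \<in> R then m v else 0)" for v
  have s1: "(\<Sum>v\<in>S. m' v *\<^sub>R v) = (\<Sum>v\<in>R. m' v *\<^sub>R v)"
    by (rule sum.mono_neutral_right) (use fin R in \<open>auto simp: m'_def\<close>)
  have s2: "(\<Sum>v\<in>S. m' v * a v) = (\<Sum>v\<in>R. m' v * a v)"
    by (rule sum.mono_neutral_right) (use fin R in \<open>auto simp: m'_def\<close>)
  have "(\<Sum>v\<in>S. (l v - m' v) *\<^sub>R v) = 0"
    using eq s1 by (simp add: scaleR_left_diff_distrib sum_subtractf m'_def)
  then have "\<forall>v\<in>S. l v - m' v = 0"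
    using ind dependent_finite[OF fin] by (meson)
  then have "(\<Sum>v\<in>S. l v * a v) = (\<Sum>v\<in>S. m' v * a v)" by (intro sum.cong) auto
  also have "\<dots> = (\<Sum>v\<in>R. m v * a v)" using s2 by (simp add: m'_def)
  finally show ?thesis .
qed

lemma rep_unique:
  assumes fan: "smooth_projective_fan V \<Sigma>" and S: "S \<in> \<Sigma>" and T: "T \<in> \<Sigma>"
    and l: "\<forall>v\<in>S. l v \<ge> 0" and l': "\<forall>v\<in>T. l' v \<ge> 0"
    and eq: "(\<Sum>v\<in>S. l v *\<^sub>R v) = (\<Sum>v\<in>T. l' v *\<^sub>R v)"
  shows "(\<Sum>v\<in>S. l v * a v) = (\<Sum>v\<in>T. l' v * a v)"
proof -
  have "(\<Sum>v\<in>S. l v *\<^sub>R v) \<in> pos_cone S \<inter> pos_cone T"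
    unfolding pos_cone_def using l l' eq by blast
  also have "\<dots> = pos_cone (S \<inter> T)" using fan_inter[OF fan S T] .
  finally obtain m where m: "(\<Sum>v\<in>S. l v *\<^sub>R v) = (\<Sum>v\<in>S \<inter> T. m v *\<^sub>R v)"
    unfolding pos_cone_def by auto
  have "(\<Sum>v\<in>S. l v * a v) = (\<Sum>v\<in>S \<inter> T. m v * a v)"
    by (rule rep_sub[OF fan S _ m]) auto
  also have "\<dots> = (\<Sum>v\<in>T. l' v * a v)"
    by (rule rep_sub[OF fan T _ m[unfolded eq], symmetric]) auto
  finally show ?thesis .
qed

lemma supp_fun_le0:
  assumes fan: "smooth_projective_fan V \<Sigma>" and eff: "effective V a"
  shows "supp_fun \<Sigma> a u \<le> 0"
proof -
  let ?P = "\<lambda>t. \<exists>S\<in>\<Sigma>. \<exists>l. (\<forall>v\<in>S. l v \<ge> 0) \<and>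
      u = (\<Sum>v\<in>S. l v *\<^sub>R v) \<and> t = - (\<Sum>v\<in>S. l v * of_int (a v))"
  have "u \<in> (\<Union>S\<in>\<Sigma>. pos_cone S)" using fan_complete[OF fan] by simp
  then obtain S l where "S \<in> \<Sigma>" "\<forall>v\<in>S. l v \<ge> 0" "u = (\<Sum>v\<in>S. l v *\<^sub>R v)"
    unfolding pos_cone_def by auto
  then have ex: "?P (- (\<Sum>v\<in>S. l v * of_int (a v)))" by blast
  have "\<exists>!t. ?P t"
  proof (rule ex_ex1I)
    show "\<exists>t. ?P t" using ex by blast
  next
    fix t1 t2 assume P1: "?P t1" and P2: "?P t2"
    from P1 obtain S1 l1 where A1: "S1 \<in> \<Sigma>" "\<forall>v\<in>S1. l1 v \<ge> 0" "u = (\<Sum>v\<in>S1. l1 v *\<^sub>R v)"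
       "t1 = - (\<Sum>v\<in>S1. l1 v * of_int (a v))" by blast
    from P2 obtain S2 l2 where A2: "S2 \<in> \<Sigma>" "\<forall>v\<in>S2. l2 v \<ge> 0" "u = (\<Sum>v\<in>S2. l2 v *\<^sub>R v)"
       "t2 = - (\<Sum>v\<in>S2. l2 v * of_int (a v))" by blast
    have "(\<Sum>v\<in>S1. l1 v * of_int (a v)) = (\<Sum>v\<in>S2. l2 v * of_int (a v))"
      by (rule rep_unique[OF fan A1(1) A2(1) A1(2) A2(2)]) (use A1(3) A2(3) in simp)
    then show "t1 = t2" using A1(4) A2(4) by simp
  qed
  then show ?thesis unfolding supp_fun_def
  proof (rule the1I2)
    fix t assume "?P t"
    then obtain S l where S: "S \<in> \<Sigma>" "\<forall>v\<in>S. l v \<ge> 0" "t = - (\<Sum>v\<in>S. l v * of_int (a v))" by blast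
    have "S \<subseteq> V" using fan_cones[OF fan S(1)] by blast
    then have "\<forall>v\<in>S. l v * of_int (a v) \<ge> 0" using S(2) eff unfolding effective_def by auto
    then show "t \<le> 0" using S(3) by (simp add: sum_nonneg)
  qed
qed


lemma polytope_closed: fixes \<Sigma> :: "(real^'n) set set" shows "closed (polytope \<Sigma> a)"
proof -
  have eq: "polytope \<Sigma> a = (\<Inter>u. {x. supp_fun \<Sigma> a u \<le> x \<bullet> u})"
    unfolding polytope_def by blast
  have c: "closed {x::real^'n. supp_fun \<Sigma> a u \<le> x \<bullet> u}" for u
  proof -
    have "{x::real^'n. supp_fun \<Sigma> a u \<le> x \<bullet> u} = {x. inner u x \<ge> supp_fun \<Sigma> a u}"
      by (metis inner_commute)
    then show ?thesis using closed_halfspace_ge by metis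
  qed
  show ?thesis unfolding eq by (intro closed_INT ballI c)
qed
lemma polytope_bounded: fixes \<Sigma> :: "(real^'n) set set" shows "bounded (polytope \<Sigma> a)"
proof -
  let ?M = "\<Sum>i\<in>UNIV. \<bar>supp_fun \<Sigma> a (axis i 1)\<bar> + \<bar>supp_fun \<Sigma> a (- axis i 1)\<bar>"
  have nb: "norm x \<le> ?M" if x: "x \<in> polytope \<Sigma> a" for x :: "real^'n"
  proof -
    have "\<bar>x $ i\<bar> \<le> \<bar>supp_fun \<Sigma> a (axis i 1)\<bar> + \<bar>supp_fun \<Sigma> a (- axis i 1)\<bar>" for i
    proof -
      have "x \<bullet> axis i 1 \<ge> supp_fun \<Sigma> a (axis i 1)" "x \<bullet> (- axis i 1) \<ge> supp_fun \<Sigma> a (- axis i 1)"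
        using x unfolding polytope_def mem_Collect_eq by blast+
      then show ?thesis by (simp add: inner_axis)
    qed
    then have "(\<Sum>i\<in>UNIV. \<bar>x $ i\<bar>) \<le> ?M" by (intro sum_mono) auto
    then show ?thesis using norm_le_l1_cart[of x] by linarith
  qed
  show ?thesis unfolding bounded_iff by (intro exI[of _ ?M] ballI nb)
qed



lemma le_mult_nat: "0 \<le> (c::real) \<Longrightarrow> 0 < (l::nat) \<Longrightarrow> c \<le> c * real l"
  using mult_left_mono[of 1 "real l" c] by simp

theorem proposition3p5:
  fixes V :: "(real^'n) set" and \<Sigma> :: "(real^'n) set set"
    and aD aA :: "real^'n \<Rightarrow> int" and gD gA :: "real^'n \<Rightarrow> real"
  assumes "smooth_projective_fan V \<Sigma>"
    and "toric_metrized \<Sigma> aD gD"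
    and "toric_metrized \<Sigma> aA gA"
    and "effective V aA"
  shows "(\<lambda>l::nat. (LINT x : {y + z | y z. y \<in> (\<lambda>w. real l *\<^sub>R w) ` polytope \<Sigma> aD
                                   \<and> z \<in> polytope \<Sigma> aA} | lborel.
              legendre (\<lambda>u. real l * gD u + gA u) x) / real l ^ (CARD('n) + 1))
         \<longlonglongrightarrow> (LINT x : polytope \<Sigma> aD | lborel. legendre gD x)"
proof -
  note fan = assms(1)
  define PD where "PD = polytope \<Sigma> aD"
  define PA where "PA = polytope \<Sigma> aA"
  obtain CD where CD: "\<And>u. \<bar>gD u - canon_log PD u\<bar> \<le> CD"
    using assms(2) unfolding toric_metrized_def PD_def by blast
  obtain CA where CA: "\<And>u. \<bar>gA u - canon_log PA u\<bar> \<le> CA"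
    using assms(3) unfolding toric_metrized_def PA_def by blast
  have CD0: "CD \<ge> 0" using CD[of 0] by linarith
  have CA0: "CA \<ge> 0" using CA[of 0] by linarith
  have bPD: "bounded PD" and cPD: "closed PD" and bPA: "bounded PA" and cPA: "closed PA"
    unfolding PD_def PA_def by (auto intro: polytope_bounded polytope_closed)
  have A0: "0 \<in> PA" unfolding PA_def polytope_def using supp_fun_le0[OF fan assms(4)] by simp
  obtain rD where rD: "rD > 0" "\<And>x. x \<in> PD \<Longrightarrow> norm x \<le> rD" using bPD bounded_pos by blast
  obtain rA where rA: "rA > 0" "\<And>x. x \<in> PA \<Longrightarrow> norm x \<le> rA" using bPA bounded_pos by blast
  have bdd: "bdd_below ((\<lambda>v. v \<bullet> u) ` P)" if "\<And>x. x \<in> P \<Longrightarrow> norm x \<le> r" for P r and u :: "real^'n"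
  proof (rule bdd_belowI2[of _ "- (r * norm u)"])
    fix v assume "v \<in> P"
    then have "\<bar>v \<bullet> u\<bar> \<le> r * norm u"
      using Cauchy_Schwarz_ineq2[of v u] that[of v] by (meson mult_right_mono norm_ge_zero order_trans)
    then show "- (r * norm u) \<le> v \<bullet> u" by linarith
  qed
  have lowD: "- CD \<le> y1 \<bullet> u - gD u" if "y1 \<in> PD" for y1 u
  proof -
    have "canon_log PD u \<le> y1 \<bullet> u" unfolding canon_log_def
      by (rule cINF_lower[OF bdd[OF rD(2)] that])
    then show ?thesis using CD[of u] by linarith
  qed
  have lowA: "- CA \<le> z \<bullet> u - gA u" if "z \<in> PA" for z u
  proof -
    have "canon_log PA u \<le> z \<bullet> u" unfolding canon_log_def
      by (rule cINF_lower[OF bdd[OF rA(2)] that])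
    then show ?thesis using CA[of u] by linarith
  qed
  have gA_le: "gA u \<le> CA" for u using lowA[OF A0, of u] by simp

  define R where "R l = {y + z | y z. y \<in> (\<lambda>w. real l *\<^sub>R w) ` PD \<and> z \<in> PA}" for l :: nat
  define S where "S l = {y. real l *\<^sub>R y \<in> R l}" for l :: nat
  define hl where "hl l = legendre (\<lambda>u. gD u + gA u / real l)" for l :: nat
  define F where "F l y = indicator (S l) y * hl l y" for l :: nat and y
  define G where "G y = indicator PD y * legendre gD y" for y
  define K where "K = CD + CA + \<bar>gD 0\<bar> + \<bar>gA 0\<bar>"

  have memS: "y \<in> S l \<longleftrightarrow> (\<exists>y1\<in>PD. \<exists>z\<in>PA. real l *\<^sub>R y = real l *\<^sub>R y1 + z)" for l y
    unfolding S_def R_def by auto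
  have bddS: "- CD - CA \<le> y \<bullet> u - (gD u + gA u / real l)" if l: "l > 0" and y: "y \<in> S l" for l y u
  proof -
    obtain y1 z where yz: "y1 \<in> PD" "z \<in> PA" "real l *\<^sub>R y = real l *\<^sub>R y1 + z" using y memS by blast
    have "real l * (y \<bullet> u) = real l * (y1 \<bullet> u) + z \<bullet> u"
      using arg_cong[OF yz(3), of "\<lambda>x. x \<bullet> u"] by (simp add: inner_add_left)
    then have e: "y \<bullet> u = y1 \<bullet> u + (z \<bullet> u) / real l" using l by (simp add: field_simps)
    have "(z \<bullet> u - gA u) / real l \<ge> - CA / real l" using divide_right_mono[OF lowA[OF yz(2), of u], of "real l"] l by simp
    moreover have "- CA / real l \<ge> - CA"
    proof -
      have "CA * 1 \<le> CA * real l" using l CA0 by (intro mult_left_mono) auto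
      then show ?thesis using l by (simp add: field_simps)
    qed
    ultimately have "(z \<bullet> u - gA u) / real l \<ge> - CA" by linarith
    moreover have "y \<bullet> u - (gD u + gA u / real l) = (y1 \<bullet> u - gD u) + (z \<bullet> u - gA u) / real l"
      using e by (simp add: diff_divide_distrib)
    ultimately show ?thesis using lowD[OF yz(1), of u] by linarith
  qed
  have bddS': "bdd_below (range (\<lambda>u. y \<bullet> u - (gD u + gA u / real l)))" if "l > 0" "y \<in> S l" for l y
    by (rule bdd_belowI2[of _ "- CD - CA"]) (rule bddS[OF that])
  have absS: "\<bar>hl l y\<bar> \<le> K" if l: "l > 0" and y: "y \<in> S l" for l y
  proof -
    have "hl l y \<ge> - CD - CA" unfolding hl_def legendre_def
      by (rule cINF_greatest) (auto intro: bddS[OF that])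
    moreover have "hl l y \<le> y \<bullet> 0 - (gD 0 + gA 0 / real l)" unfolding hl_def legendre_def
      by (rule cINF_lower[OF bddS'[OF that]]) simp
    moreover have "\<bar>gA 0 / real l\<bar> \<le> \<bar>gA 0\<bar>" using l le_mult_nat[of "\<bar>gA 0\<bar>" l] by (simp add: abs_div divide_le_eq)
    moreover have "- gD 0 \<le> \<bar>gD 0\<bar>" by simp
    ultimately show ?thesis unfolding K_def using CD0 CA0 abs_ge_minus_self[of "gA 0 / real l"]
      abs_ge_zero[of "gD 0"] abs_ge_zero[of "gA 0"] by (simp only: abs_le_iff inner_zero_right) linarith
  qed
  have normS: "norm y \<le> rD + rA" if l: "l > 0" and y: "y \<in> S l" for l y
  proof -
    obtain y1 z where yz: "y1 \<in> PD" "z \<in> PA" "real l *\<^sub>R y = real l *\<^sub>R y1 + z" using y memS by blast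
    have "y = (1 / real l) *\<^sub>R (real l *\<^sub>R y)" using l by simp
    also have "\<dots> = (1 / real l) *\<^sub>R (real l *\<^sub>R y1 + z)" using yz(3) by simp
    also have "\<dots> = y1 + (1 / real l) *\<^sub>R z" using l by (simp add: scaleR_right_distrib)
    finally have "y = y1 + (1 / real l) *\<^sub>R z" .
    then have "norm y \<le> norm y1 + norm z / real l" using norm_triangle_ineq[of y1 "(1 / real l) *\<^sub>R z"] l by simp
    moreover have "norm z / real l \<le> norm z" using l by (simp add: divide_le_eq mult_le_cancel_left1)
    ultimately show ?thesis using rD(2)[OF yz(1)] rA(2)[OF yz(2)] by linarith
  qed
  have cR: "compact (R l)" for l
  proof -
    have "compact ((\<lambda>w. real l *\<^sub>R w) ` PD)" using bPD cPD
      by (intro compact_scaling) (simp add: compact_eq_bounded_closed)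
    moreover have "compact PA" using bPA cPA by (simp add: compact_eq_bounded_closed)
    ultimately show ?thesis unfolding R_def by (rule compact_sums)
  qed
  have cS: "closed (S l)" for l
  proof -
    have "S l = (\<lambda>y. real l *\<^sub>R y) -` R l" unfolding S_def by auto
    moreover have "closed ((\<lambda>y. real l *\<^sub>R y) -` R l)"
      by (rule continuous_closed_vimage) (use cR compact_imp_closed in auto)
    ultimately show ?thesis by simp
  qed
  have lb: "f \<in> borel_measurable lborel" if "f \<in> borel_measurable borel" for f :: "real^'n \<Rightarrow> real"
    using that measurable_cong_sets[OF sets_lborel refl] by blast
  have mF: "F l \<in> borel_measurable borel" if l: "l > 0" for l
  proof -
    have "(\<lambda>x. indicator (S l) x * legendre (\<lambda>u. gD u + gA u / real l) x) \<in> borel_measurable borel"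
      by (rule measurable_ind_legendre[OF borel_closed[OF cS]]) (rule bddS'[OF l])
    then show ?thesis unfolding F_def[abs_def] hl_def .
  qed
  have mG: "G \<in> borel_measurable borel"
  proof -
    have "(\<lambda>x. indicator PD x * legendre gD x) \<in> borel_measurable borel"
      by (rule measurable_ind_legendre[OF borel_closed[OF cPD]]) (rule bdd_belowI2[of _ "- CD"], rule lowD)
    then show ?thesis unfolding G_def[abs_def] .
  qed
  have Xeq: "(LINT x : R l | lborel. legendre (\<lambda>u. real l * gD u + gA u) x) / real l ^ (CARD('n) + 1)
      = integral\<^sup>L lborel (F l)" if l: "l > 0" for l
  proof -
    let ?f = "\<lambda>x. indicator (R l) x * legendre (\<lambda>u. real l * gD u + gA u) x"
    have bR: "bdd_below (range (\<lambda>u. x \<bullet> u - (real l * gD u + gA u)))" if x: "x \<in> R l" for x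
    proof -
      from x obtain y1 z where yz: "y1 \<in> PD" "z \<in> PA" "x = real l *\<^sub>R y1 + z" unfolding R_def by auto
      show ?thesis
      proof (rule bdd_belowI2[of _ "- real l * CD - CA"])
        fix u
        have e: "x \<bullet> u - (real l * gD u + gA u) = real l * (y1 \<bullet> u - gD u) + (z \<bullet> u - gA u)"
          using yz(3) by (simp add: inner_add_left algebra_simps)
        have "real l * (- CD) \<le> real l * (y1 \<bullet> u - gD u)"
          using lowD[OF yz(1), of u] by (intro mult_left_mono) auto
        then show "- real l * CD - CA \<le> x \<bullet> u - (real l * gD u + gA u)"
          using e lowA[OF yz(2), of u] by simp
      qed
    qed
    have mf: "?f \<in> borel_measurable borel"
      by (rule measurable_ind_legendre[OF borel_closed[OF compact_imp_closed[OF cR]]]) (rule bR)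
    have "(LINT x : R l | lborel. legendre (\<lambda>u. real l * gD u + gA u) x) = integral\<^sup>L lborel ?f"
      by (simp add: set_lebesgue_integral_def)
    also have "\<dots> = \<bar>real l\<bar>^DIM(real^'n) * (\<integral>y. ?f (real l *\<^sub>R y) \<partial>lborel)"
      by (rule lborel_integral_scale[OF mf]) (use l in simp)
    also have "(\<integral>y. ?f (real l *\<^sub>R y) \<partial>lborel) = (\<integral>y. real l * F l y \<partial>lborel)"
    proof (rule Bochner_Integration.integral_cong[OF refl])
      fix y
      show "?f (real l *\<^sub>R y) = real l * F l y"
      proof (cases "y \<in> S l")
        case True
        then have inR: "real l *\<^sub>R y \<in> R l" unfolding S_def by simp
        have "legendre (\<lambda>u. real l * gD u + gA u) (real l *\<^sub>R y)
            = (INF u. real l * (y \<bullet> u - (gD u + gA u / real l)))"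
          unfolding legendre_def by (intro INF_cong refl) (use l in \<open>simp add: field_simps\<close>)
        also have "\<dots> = real l * hl l y" unfolding hl_def legendre_def
          by (rule cINF_mult_pos) (use l bddS'[OF l True] in auto)
        finally show ?thesis using True inR by (simp add: F_def)
      next
        case False then have "real l *\<^sub>R y \<notin> R l" unfolding S_def by simp
        with False show ?thesis by (simp add: F_def)
      qed
    qed
    finally show ?thesis using l by (simp add: power_add field_simps)
  qed
  define w where "w y = K * indicator (cball 0 (rD + rA)) y" for y :: "real^'n"
  have K0: "K \<ge> 0" unfolding K_def using CD0 CA0 by simp
  have iw: "integrable lborel w" unfolding w_def
    using emeasure_bounded_finite[OF bounded_cball[of 0 "rD + rA"]]
    by (intro integrable_mult_right) (simp add: integrable_indicator_iff borel_closed)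
  have bnd: "AE y in lborel. norm (F (Suc i) y) \<le> w y" for i
  proof (rule AE_I2)
    fix y show "norm (F (Suc i) y) \<le> w y"
    proof (cases "y \<in> S (Suc i)")
      case True
      then show ?thesis using absS[OF _ True] normS[OF _ True] by (simp add: F_def w_def)
    next
      case False then show ?thesis using K0 by (simp add: F_def w_def)
    qed
  qed
  have conv_pt: "(\<lambda>i. F (Suc i) y) \<longlonglongrightarrow> G y" for y
  proof (cases "y \<in> PD")
    case True
    have inS: "y \<in> S l" if "l > 0" for l unfolding memS using True A0 by force
    let ?h = "legendre gD y"
    have bD: "bdd_below (range (\<lambda>u. y \<bullet> u - gD u))"
      by (rule bdd_belowI2[of _ "-CD"]) (rule lowD[OF True])
    have FG: "(\<lambda>i. F (Suc i) y) = (\<lambda>i. hl (Suc i) y)" "G y = ?h" using inS True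
      unfolding F_def G_def by auto
    have lo: "?h - CA / real l \<le> hl l y" if "l > 0" for l
      unfolding hl_def legendre_def
    proof (rule cINF_greatest)
      fix u
      have "(INF u. y \<bullet> u - gD u) \<le> y \<bullet> u - gD u" by (rule cINF_lower[OF bD]) simp
      moreover have "gA u / real l \<le> CA / real l" using gA_le[of u] that by (simp add: divide_right_mono)
      ultimately show "(INF u. y \<bullet> u - gD u) - CA / real l \<le> y \<bullet> u - (gD u + gA u / real l)"
        by linarith
    qed simp
    have up: "hl l y \<le> y \<bullet> u - (gD u + gA u / real l)" if "l > 0" for l u
      unfolding hl_def legendre_def by (rule cINF_lower[OF bddS'[OF that inS[OF that]]]) simp
    show ?thesis unfolding FG
    proof (rule LIMSEQ_I)
      fix r :: real assume r: "r > 0"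
      have "(INF u. y \<bullet> u - gD u) < ?h + r/2" using r by (simp add: legendre_def)
      then obtain u where u: "y \<bullet> u - gD u < ?h + r/2"
        using cINF_less_iff[of UNIV "\<lambda>u. y \<bullet> u - gD u"] bD by auto
      obtain N :: nat where N: "2 * (\<bar>gA u\<bar> + CA) / r < real N" using reals_Archimedean2 by blast
      show "\<exists>no. \<forall>n\<ge>no. norm (hl (Suc n) y - ?h) < r"
      proof (intro exI allI impI)
        fix n assume nN: "N \<le> n"
        define l where "l = real (Suc n)"
        have l0: "l > 0" unfolding l_def by simp
        have lN: "real N < l" using nN unfolding l_def by simp
        have "2 * (\<bar>gA u\<bar> + CA) < r * real N" using N r by (simp add: divide_less_eq mult.commute)
        also have "\<dots> \<le> r * l" using lN r by simp
        finally have q: "2 * (\<bar>gA u\<bar> + CA) < r * l" .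
        have e1: "\<bar>gA u\<bar> / l < r/2" using q l0 CA0 by (simp add: divide_less_eq)
        have e2: "CA / l < r/2" using q l0 by (simp add: divide_less_eq)
        have "- gA u / l \<le> \<bar>gA u\<bar> / l" using l0 by (intro divide_right_mono) auto
        then have "- (gA u / l) \<le> \<bar>gA u\<bar> / l" by simp
        moreover have A: "hl (Suc n) y \<le> y \<bullet> u - (gD u + gA u / l)" using up[of "Suc n" u] unfolding l_def by simp
        moreover have B: "?h - CA / l \<le> hl (Suc n) y" using lo[of "Suc n"] unfolding l_def by simp
        ultimately show "norm (hl (Suc n) y - ?h) < r" using u e1 e2
          unfolding real_norm_def abs_less_iff by (intro conjI) linarith+
      qed
    qed
  next
    case False
    obtain e where e: "e > 0" "ball y e \<subseteq> - PD"
      using cPD False open_contains_ball[of "-PD"] unfolding closed_def by blast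
    obtain N :: nat where N: "rA / e < real N" using reals_Archimedean2 by blast
    have "F (Suc i) y = 0" if iN: "N \<le> i" for i
    proof -
      have "y \<notin> S (Suc i)"
      proof
        assume "y \<in> S (Suc i)"
        then obtain y1 z where yz: "y1 \<in> PD" "z \<in> PA" "real (Suc i) *\<^sub>R y = real (Suc i) *\<^sub>R y1 + z"
          using memS by blast
        define l where "l = real (Suc i)"
        have l0: "l > 0" unfolding l_def by simp
        have "l *\<^sub>R (y - y1) = z" using yz(3) unfolding l_def by (simp add: scaleR_right_diff_distrib)
        then have "(1 / l) *\<^sub>R (l *\<^sub>R (y - y1)) = (1 / l) *\<^sub>R z" by simp
        then have "y - y1 = (1 / l) *\<^sub>R z" using l0 by simp
        then have "dist y y1 = norm z / l" using l0 by (simp add: dist_norm)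
        also have "\<dots> \<le> rA / l" using rA(2)[OF yz(2)] l0 by (simp add: divide_right_mono)
        also have "\<dots> < e"
        proof -
          have "rA < e * real N" using N e(1) by (simp add: divide_less_eq mult.commute)
          also have "\<dots> \<le> e * l" using iN e(1) unfolding l_def by simp
          finally show ?thesis using l0 by (simp add: divide_less_eq mult.commute)
        qed
        finally have "y1 \<in> ball y e" by simp
        with e(2) yz(1) show False by auto
      qed
      then show ?thesis by (simp add: F_def)
    qed
    then have "\<forall>\<^sub>F i in sequentially. F (Suc i) y = 0" unfolding eventually_sequentially by blast
    moreover have "G y = 0" using False by (simp add: G_def)
    ultimately show ?thesis by (simp add: tendsto_eventually)
  qed
  have lim: "(\<lambda>i. integral\<^sup>L lborel (F (Suc i))) \<longlonglongrightarrow> integral\<^sup>L lborel G"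
    by (rule integral_dominated_convergence[OF lb[OF mG] lb[OF mF] iw AE_I2[OF conv_pt] bnd]) simp
  have rhs: "integral\<^sup>L lborel G = (LINT x : PD | lborel. legendre gD x)"
    by (simp add: set_lebesgue_integral_def G_def[abs_def])
  have "(\<lambda>i. (LINT x : R (Suc i) | lborel. legendre (\<lambda>u. real (Suc i) * gD u + gA u) x)
       / real (Suc i) ^ (CARD('n) + 1)) \<longlonglongrightarrow> (LINT x : PD | lborel. legendre gD x)"
    using lim unfolding rhs by (subst Xeq) simp_all
  then have "(\<lambda>l. (LINT x : R l | lborel. legendre (\<lambda>u. real l * gD u + gA u) x)
       / real l ^ (CARD('n) + 1)) \<longlonglongrightarrow> (LINT x : PD | lborel. legendre gD x)"
    by (rule LIMSEQ_imp_Suc)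
  then show ?thesis unfolding R_def PD_def PA_def .
qed

end
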